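(* Let $\hat G_0$ be an arbitrary $M$-mode Gaussian unitary and $\hat P(\boldsymbol\varphi)=e^{i\boldsymbol\varphi\cdot\hat{\boldsymbol n}}$ a phase shifter with $\boldsymbol\varphi=(\varphi_1,\dots,\varphi_L,0,\dots,0)$. Then $\hat G_0^\dagger\hat P(\boldsymbol\varphi)\hat G_0$ can be decomposed as $\hat U\hat S(\boldsymbol r)\hat V$, where $\hat U,\hat V$ are linear-optical unitaries and $\hat S(\boldsymbol r)=\bigotimes_{i=1}^M\hat S(r_i)$ is a product of single-mode squeezers with at most $2L$ nonzero squeezing parameters $r_i$.
   Context: $\hat{\boldsymbol n}=(\hat a_1^\dagger\hat a_1,\dots,\hat a_M^\dagger\hat a_M)$. A linear-optical unitary satisfies $\hat U^\dagger\hat a_i\hat U=\sum_j U_{ij}\hat a_j$ for a unitary matrix $U$. The single-mode squeezer satisfies $\hat S^\dagger(r)\hat a\hat S(r)=\cosh r\,\hat a+\sinh r\,\hat a^\dagger$. A Gaussian unitary is any unitary of the form $\hat U\hat S(\boldsymbol s)\hat V$ with $\hat U,\hat V$ linear-optical and $\boldsymbol s\in\mathbb R^M$ (Bloch–Messiah form). *)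

theory Defs
  imports Complex_Main "Jordan_Normal_Form.Matrix"
begin

text \<open>Gaussian unitaries on M modes are represented by their Bogoliubov (Heisenberg-picture)
  action: a pair (A,B) of M x M complex matrices encodes
  G^dagger a_i G = sum_j A_ij a_j + B_ij a_j^dagger.\<close>

type_synonym bogo = "complex mat \<times> complex mat"

definition cmat :: "complex mat \<Rightarrow> complex mat" where
  "cmat A = map_mat cnj A"

definition adj :: "complex mat \<Rightarrow> complex mat" where
  "adj A = cmat (transpose_mat A)"

definition unitary_mat :: "nat \<Rightarrow> complex mat \<Rightarrow> bool" where
  "unitary_mat M U \<longleftrightarrow> U \<in> carrier_mat M M \<and> U * adj U = 1\<^sub>m M \<and> adj U * U = 1\<^sub>m M"

text \<open>Operator product G1 G2: (G1 G2)^dagger a (G1 G2) = G2^dagger (G1^dagger a G1) G2.\<close>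
definition bogo_comp :: "bogo \<Rightarrow> bogo \<Rightarrow> bogo" where
  "bogo_comp G1 G2 = (case G1 of (A1, B1) \<Rightarrow> case G2 of (A2, B2) \<Rightarrow>
     (A1 * A2 + B1 * cmat B2, A1 * B2 + B1 * cmat A2))"

definition bogo_adj :: "bogo \<Rightarrow> bogo" where
  "bogo_adj G = (case G of (A, B) \<Rightarrow> (adj A, - transpose_mat B))"

definition lin_opt :: "nat \<Rightarrow> complex mat \<Rightarrow> bogo" where
  "lin_opt M U = (U, 0\<^sub>m M M)"

definition squeezer :: "nat \<Rightarrow> (nat \<Rightarrow> real) \<Rightarrow> bogo" where
  "squeezer M r = (mat M M (\<lambda>(i, j). if i = j then complex_of_real (cosh (r i)) else 0),
                   mat M M (\<lambda>(i, j). if i = j then complex_of_real (sinh (r i)) else 0))"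

text \<open>Phase shifter P(phi) = exp(i phi . n): P^dagger a_j P = e^{i phi_j} a_j.\<close>
definition phase_shifter :: "nat \<Rightarrow> (nat \<Rightarrow> real) \<Rightarrow> bogo" where
  "phase_shifter M \<phi> = (mat M M (\<lambda>(i, j). if i = j then cis (\<phi> i) else 0), 0\<^sub>m M M)"

definition gaussian :: "nat \<Rightarrow> bogo \<Rightarrow> bool" where
  "gaussian M G \<longleftrightarrow> (\<exists>U V s. unitary_mat M U \<and> unitary_mat M V \<and>
      G = bogo_comp (lin_opt M U) (bogo_comp (squeezer M s) (lin_opt M V)))"

end

theory Submission
  imports Defs "Jordan_Normal_Form.Determinant" "Jordan_Normal_Form.Schur_Decomposition" "Jordan_Normal_Form.Spectral_Radius"
begin

lemma cmat_dims[simp]: "dim_row (cmat A) = dim_row A" "dim_col (cmat A) = dim_col A"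
  by (auto simp: cmat_def)
lemma adj_dims[simp]: "dim_row (adj A) = dim_col A" "dim_col (adj A) = dim_row A"
  by (auto simp: adj_def)
lemma cmat_index[simp]: "i < dim_row A \<Longrightarrow> j < dim_col A \<Longrightarrow> cmat A $$ (i,j) = cnj (A $$ (i,j))"
  by (auto simp: cmat_def)
lemma adj_index[simp]: "i < dim_col A \<Longrightarrow> j < dim_row A \<Longrightarrow> adj A $$ (i,j) = cnj (A $$ (j,i))"
  by (auto simp: adj_def)
lemma cmat_carrier[simp]: "cmat A \<in> carrier_mat n m \<longleftrightarrow> A \<in> carrier_mat n m"
  unfolding carrier_mat_def by simp
lemma adj_carrier[simp]: "adj A \<in> carrier_mat n m \<longleftrightarrow> A \<in> carrier_mat m n"
  unfolding carrier_mat_def by auto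
lemma transpose_carrier[simp]: "transpose_mat A \<in> carrier_mat n m \<longleftrightarrow> A \<in> carrier_mat m n"
  unfolding carrier_mat_def by auto

lemma cmat_mult: "A \<in> carrier_mat n k \<Longrightarrow> B \<in> carrier_mat k m \<Longrightarrow> cmat (A * B) = cmat A * cmat B"
  by (rule eq_matI) (auto simp: scalar_prod_def sum_conjugate cmat_def)
lemma adj_mult: "A \<in> carrier_mat n k \<Longrightarrow> B \<in> carrier_mat k m \<Longrightarrow> adj (A * B) = adj B * adj A"
  by (rule eq_matI) (auto simp: scalar_prod_def adj_def ac_simps intro!: sum.cong)
lemma cmat_add: "A \<in> carrier_mat n m \<Longrightarrow> B \<in> carrier_mat n m \<Longrightarrow> cmat (A + B) = cmat A + cmat B"
  by (rule eq_matI) (auto simp: cmat_def)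
lemma adj_add: "A \<in> carrier_mat n m \<Longrightarrow> B \<in> carrier_mat n m \<Longrightarrow> adj (A + B) = adj A + adj B"
  by (rule eq_matI) (auto simp: adj_def)
lemma cmat_minus: "A \<in> carrier_mat n m \<Longrightarrow> B \<in> carrier_mat n m \<Longrightarrow> cmat (A - B) = cmat A - cmat B"
  by (rule eq_matI) (auto simp: cmat_def)
lemma adj_minus: "A \<in> carrier_mat n m \<Longrightarrow> B \<in> carrier_mat n m \<Longrightarrow> adj (A - B) = adj A - adj B"
  by (rule eq_matI) (auto simp: adj_def)
lemma cmat_uminus[simp]: "cmat (- A) = - cmat A"
  by (rule eq_matI) (auto simp: cmat_def)
lemma adj_uminus[simp]: "adj (- A) = - adj A"
  by (rule eq_matI) (auto simp: adj_def)
lemma cmat_one[simp]: "cmat (1\<^sub>m n) = 1\<^sub>m n"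
  by (rule eq_matI) (auto simp: cmat_def)
lemma adj_one[simp]: "adj (1\<^sub>m n) = 1\<^sub>m n"
  by (rule eq_matI) (auto simp: adj_def)
lemma cmat_zero[simp]: "cmat (0\<^sub>m n m) = 0\<^sub>m n m"
  by (rule eq_matI) (auto simp: cmat_def)
lemma cmat_cmat[simp]: "cmat (cmat A) = A"
  by (rule eq_matI) (auto simp: cmat_def)
lemma adj_adj[simp]: "adj (adj A) = A"
  by (rule eq_matI) (auto simp: adj_def cmat_def)
lemma cmat_transpose: "cmat (transpose_mat A) = adj A"
  by (simp add: adj_def)
lemma transpose_cmat: "transpose_mat (cmat A) = adj A"
  by (rule eq_matI) (auto simp: adj_def cmat_def)
lemma cmat_adj: "cmat (adj A) = transpose_mat A"
  by (rule eq_matI) (auto simp: adj_def cmat_def)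
lemma transpose_adj: "transpose_mat (adj A) = cmat A"
  by (rule eq_matI) (auto simp: adj_def cmat_def)

lemma sq_carrier[simp]:
  "A \<in> carrier_mat n n \<Longrightarrow> B \<in> carrier_mat n n \<Longrightarrow> A * B \<in> carrier_mat n n"
  "A \<in> carrier_mat n n \<Longrightarrow> B \<in> carrier_mat n n \<Longrightarrow> A + B \<in> carrier_mat n n"
  "A \<in> carrier_mat n n \<Longrightarrow> B \<in> carrier_mat n n \<Longrightarrow> A - B \<in> carrier_mat n n"
  by auto

lemma msq0: fixes A B C :: "complex mat" shows "A \<in> carrier_mat n n \<Longrightarrow> B \<in> carrier_mat n n \<Longrightarrow> cmat (A * B) = cmat A * cmat B"
  by (rule cmat_mult) (assumption+)
lemma msq1: fixes A B C :: "complex mat" shows "A \<in> carrier_mat n n \<Longrightarrow> B \<in> carrier_mat n n \<Longrightarrow> adj (A * B) = adj B * adj A"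
  by (rule adj_mult) (assumption+)
lemma msq2: fixes A B C :: "complex mat" shows "A \<in> carrier_mat n n \<Longrightarrow> B \<in> carrier_mat n n \<Longrightarrow> transpose_mat (A * B) = transpose_mat B * transpose_mat A"
  by (rule transpose_mult) (assumption+)
lemma msq3: fixes A B C :: "complex mat" shows "A \<in> carrier_mat n n \<Longrightarrow> B \<in> carrier_mat n n \<Longrightarrow> cmat (A + B) = cmat A + cmat B"
  by (rule cmat_add) (assumption+)
lemma msq4: fixes A B C :: "complex mat" shows "A \<in> carrier_mat n n \<Longrightarrow> B \<in> carrier_mat n n \<Longrightarrow> adj (A + B) = adj A + adj B"
  by (rule adj_add) (assumption+)
lemma msq5: fixes A B C :: "complex mat" shows "A \<in> carrier_mat n n \<Longrightarrow> B \<in> carrier_mat n n \<Longrightarrow> transpose_mat (A + B) = transpose_mat A + transpose_mat B"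
  by (rule transpose_add) (assumption+)
lemma msq6: fixes A B C :: "complex mat" shows "A \<in> carrier_mat n n \<Longrightarrow> B \<in> carrier_mat n n \<Longrightarrow> cmat (A - B) = cmat A - cmat B"
  by (rule cmat_minus) (assumption+)
lemma msq7: fixes A B C :: "complex mat" shows "A \<in> carrier_mat n n \<Longrightarrow> B \<in> carrier_mat n n \<Longrightarrow> adj (A - B) = adj A - adj B"
  by (rule adj_minus) (assumption+)
lemma msq8: fixes A B C :: "complex mat" shows "A \<in> carrier_mat n n \<Longrightarrow> B \<in> carrier_mat n n \<Longrightarrow> transpose_mat (A - B) = transpose_mat A - transpose_mat B"
  by (rule transpose_minus) (assumption+)
lemma msq9: fixes A B C :: "complex mat" shows "A \<in> carrier_mat n n \<Longrightarrow> B \<in> carrier_mat n n \<Longrightarrow> C \<in> carrier_mat n n \<Longrightarrow> (A + B) * C = A * C + B * C"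
  by (rule add_mult_distrib_mat) (assumption+)
lemma msq10: fixes A B C :: "complex mat" shows "A \<in> carrier_mat n n \<Longrightarrow> B \<in> carrier_mat n n \<Longrightarrow> C \<in> carrier_mat n n \<Longrightarrow> A * (B + C) = A * B + A * C"
  by (rule mult_add_distrib_mat) (assumption+)
lemma msq11: fixes A B C :: "complex mat" shows "A \<in> carrier_mat n n \<Longrightarrow> B \<in> carrier_mat n n \<Longrightarrow> C \<in> carrier_mat n n \<Longrightarrow> (A - B) * C = A * C - B * C"
  by (rule minus_mult_distrib_mat) (assumption+)
lemma msq12: fixes A B C :: "complex mat" shows "A \<in> carrier_mat n n \<Longrightarrow> B \<in> carrier_mat n n \<Longrightarrow> C \<in> carrier_mat n n \<Longrightarrow> A * (B - C) = A * B - A * C"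
  by (rule mult_minus_distrib_mat) (assumption+)
lemma msq13: fixes A B C :: "complex mat" shows "A \<in> carrier_mat n n \<Longrightarrow> B \<in> carrier_mat n n \<Longrightarrow> C \<in> carrier_mat n n \<Longrightarrow> A * B * C = A * (B * C)"
  by (rule assoc_mult_mat) (assumption+)
lemma msq14: fixes A B C :: "complex mat" shows "A \<in> carrier_mat n n \<Longrightarrow> A * 1\<^sub>m n = A"
  by (rule right_mult_one_mat) (assumption+)
lemma msq15: fixes A B C :: "complex mat" shows "A \<in> carrier_mat n n \<Longrightarrow> 1\<^sub>m n * A = A"
  by (rule left_mult_one_mat) (assumption+)
lemmas msq = msq0 msq1 msq2 msq3 msq4 msq5 msq6 msq7 msq8 msq9 msq10 msq11 msq12 msq13 msq14 msq15

lemma adj_cmat: "adj (cmat A) = transpose_mat A"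
  by (rule eq_matI) (auto simp: adj_def cmat_def)
lemma adj_transpose: "adj (transpose_mat A) = cmat A"
  by (rule eq_matI) (auto simp: adj_def cmat_def)

lemmas mcon = cmat_transpose transpose_cmat cmat_adj transpose_adj adj_cmat adj_transpose

definition ent :: "nat \<Rightarrow> nat \<Rightarrow> complex mat \<Rightarrow> complex" where "ent i j A = A $$ (i,j)"

lemma ent_simps0:
  "i < n \<Longrightarrow> j < n \<Longrightarrow> ent i j (1\<^sub>m n) = (if i = j then 1 else 0)"
  "i < n \<Longrightarrow> j < n \<Longrightarrow> ent i j (0\<^sub>m n n) = 0"
  by (auto simp: ent_def)

lemma ent_simps:
  "A \<in> carrier_mat n n \<Longrightarrow> B \<in> carrier_mat n n \<Longrightarrow> i < n \<Longrightarrow> j < n \<Longrightarrow> ent i j (A + B) = ent i j A + ent i j B"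
  "A \<in> carrier_mat n n \<Longrightarrow> B \<in> carrier_mat n n \<Longrightarrow> i < n \<Longrightarrow> j < n \<Longrightarrow> ent i j (A - B) = ent i j A - ent i j B"
  "A \<in> carrier_mat n n \<Longrightarrow> i < n \<Longrightarrow> j < n \<Longrightarrow> ent i j (- A) = - ent i j A"
  by (auto simp: ent_def)

lemma mat_eq_ent:
  assumes "A \<in> carrier_mat n n" "B \<in> carrier_mat n n"
    "\<And>i j. i < n \<Longrightarrow> j < n \<Longrightarrow> ent i j A = ent i j B"
  shows "A = B"
  using assms by (auto simp: ent_def)


definition rowrel :: "nat \<Rightarrow> bogo \<Rightarrow> bool" where
  "rowrel n G \<longleftrightarrow> (case G of (A,B) \<Rightarrow> A \<in> carrier_mat n n \<and> B \<in> carrier_mat n n \<and>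
     A * adj A - B * adj B = 1\<^sub>m n \<and> A * transpose_mat B = B * transpose_mat A)"



lemma rowrel_comp:
  assumes "rowrel n G1" "rowrel n G2"
  shows "rowrel n (bogo_comp G1 G2)"
proof -
  obtain A1 B1 where G1: "G1 = (A1,B1)" by force
  obtain A2 B2 where G2: "G2 = (A2,B2)" by force
  have c: "A1 \<in> carrier_mat n n" "B1 \<in> carrier_mat n n" "A2 \<in> carrier_mat n n" "B2 \<in> carrier_mat n n"
    and R11: "A1 * adj A1 - B1 * adj B1 = 1\<^sub>m n" and R12: "A1 * transpose_mat B1 = B1 * transpose_mat A1"
    and R21: "A2 * adj A2 - B2 * adj B2 = 1\<^sub>m n" and R22: "A2 * transpose_mat B2 = B2 * transpose_mat A2"
    using assms by (auto simp: rowrel_def G1 G2)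
  note ms = msq[where n=n] mcon
  have C21: "cmat A2 * transpose_mat A2 - cmat B2 * transpose_mat B2 = 1\<^sub>m n"
    using arg_cong[OF R21, of cmat] c by (simp add: ms)
  have C22: "cmat A2 * adj B2 = cmat B2 * adj A2"
    using arg_cong[OF R22, of cmat] c by (simp add: ms)
  have F1: "A1 * (A2 * adj A2 - B2 * adj B2) * adj A1 = A1 * adj A1" using R21 c by (simp add: ms)
  have F2: "B1 * (cmat A2 * transpose_mat A2 - cmat B2 * transpose_mat B2) * adj B1 = B1 * adj B1" using C21 c by (simp add: ms)
  have F3: "A1 * (A2 * transpose_mat B2) * adj B1 = A1 * (B2 * transpose_mat A2) * adj B1" using R22 by simp
  have F4: "B1 * (cmat A2 * adj B2) * adj A1 = B1 * (cmat B2 * adj A2) * adj A1" using C22 by simp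
  have F5: "A1 * (A2 * transpose_mat B2) * transpose_mat A1 = A1 * (B2 * transpose_mat A2) * transpose_mat A1" using R22 by simp
  have F6: "A1 * (A2 * adj A2 - B2 * adj B2) * transpose_mat B1 = A1 * transpose_mat B1" using R21 c by (simp add: ms)
  have F7: "B1 * (cmat A2 * transpose_mat A2 - cmat B2 * transpose_mat B2) * transpose_mat A1 = B1 * transpose_mat A1" using C21 c by (simp add: ms)
  have F8: "B1 * (cmat A2 * adj B2) * transpose_mat B1 = B1 * (cmat B2 * adj A2) * transpose_mat B1" using C22 by simp
  note F = F1 F2 F3 F4 F5 F6 F7 F8
  have F': "A1 * (A2 * (adj A2 * adj A1)) - A1 * (B2 * (adj B2 * adj A1)) = A1 * adj A1" using F1 c by (simp add: ms)
  show ?thesis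
    unfolding G1 G2 bogo_comp_def rowrel_def
    apply (simp add: c)
    apply (intro conjI)
    subgoal using c apply (simp add: ms)
      apply (rule mat_eq_ent[of _ n])
        apply (simp add: c)
       apply simp
      subgoal for i j
        using F[THEN arg_cong[of _ _ "ent i j"]] R11[THEN arg_cong[of _ _ "ent i j"]] c
        apply (simp add: ms ent_simps[where n=n])
        unfolding complex_eq_iff apply (simp only: plus_complex.sel uminus_complex.sel minus_complex.sel)
        by linarith
      done
    subgoal using c apply (simp add: ms)
      apply (rule mat_eq_ent[of _ n])
        apply (simp add: c)
       apply simp
      subgoal for i j
        using F[THEN arg_cong[of _ _ "ent i j"]] R12[THEN arg_cong[of _ _ "ent i j"]] c
        apply (simp add: ms ent_simps[where n=n])
        unfolding complex_eq_iff apply (simp only: plus_complex.sel uminus_complex.sel minus_complex.sel)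
        by linarith
      done
    done
qed

definition diagR :: "nat \<Rightarrow> (nat \<Rightarrow> real) \<Rightarrow> complex mat" where
  "diagR n \<sigma> = mat n n (\<lambda>(i,j). if i = j then complex_of_real (\<sigma> i) else 0)"

lemma diagR_carrier[simp]: "diagR n \<sigma> \<in> carrier_mat n n"
  by (simp add: diagR_def)
lemma diagR_dims[simp]: "dim_row (diagR n \<sigma>) = n" "dim_col (diagR n \<sigma>) = n"
  by (simp_all add: diagR_def)

lemma mult_diagR:
  assumes "A \<in> carrier_mat m n"
  shows "A * diagR n \<sigma> = mat m n (\<lambda>(i,k). A $$ (i,k) * complex_of_real (\<sigma> k))"
proof (rule eq_matI)
  fix i j assume ij: "i < dim_row (mat m n (\<lambda>(i,k). A $$ (i,k) * complex_of_real (\<sigma> k)))"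
     "j < dim_col (mat m n (\<lambda>(i,k). A $$ (i,k) * complex_of_real (\<sigma> k)))"
  hence ij': "i < m" "j < n" by auto
  have "(A * diagR n \<sigma>) $$ (i,j) = (\<Sum>k\<in>{0..<n}. A $$ (i,k) * (if k = j then complex_of_real (\<sigma> k) else 0))"
    using assms ij' by (auto simp: diagR_def scalar_prod_def intro!: sum.cong)
  also have "\<dots> = A $$ (i,j) * complex_of_real (\<sigma> j)"
    by (simp add: if_distrib[of "\<lambda>x. A $$ (i, _) * x"] sum.delta' ij' cong: if_cong)
  finally show "(A * diagR n \<sigma>) $$ (i,j) = mat m n (\<lambda>(i,k). A $$ (i,k) * complex_of_real (\<sigma> k)) $$ (i,j)"
    using ij' by simp
qed (use assms in auto)

lemma diag_sandwich_entry:
  assumes "A \<in> carrier_mat m n" "B \<in> carrier_mat p n" "i < m" "j < p"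
  shows "(A * diagR n \<sigma> * transpose_mat B) $$ (i,j) = (\<Sum>k<n. A $$ (i,k) * complex_of_real (\<sigma> k) * B $$ (j,k))"
  using assms by (simp add: mult_diagR scalar_prod_def atLeast0LessThan)

lemma cancel_r:
  fixes A B C :: "complex mat"
  assumes "A * B = 1\<^sub>m n" "A \<in> carrier_mat n n" "B \<in> carrier_mat n n" "C \<in> carrier_mat n m"
  shows "A * (B * C) = C"
proof -
  have "A * (B * C) = (A * B) * C" using assoc_mult_mat[OF assms(2,3,4)] by (rule sym)
  also have "\<dots> = C" unfolding assms(1) using assms(4) by (rule left_mult_one_mat)
  finally show ?thesis .
qed

lemma unitaryD:
  assumes "unitary_mat n U"
  shows "U \<in> carrier_mat n n" "U * adj U = 1\<^sub>m n" "adj U * U = 1\<^sub>m n"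
  using assms by (auto simp: unitary_mat_def)

lemma unitary_cmat_transpose:
  assumes "unitary_mat n U"
  shows "cmat U * transpose_mat U = 1\<^sub>m n" "transpose_mat U * cmat U = 1\<^sub>m n"
proof -
  have c: "U \<in> carrier_mat n n" using unitaryD[OF assms] by auto
  have "cmat (U * adj U) = 1\<^sub>m n" using unitaryD(2)[OF assms] by simp
  thus "cmat U * transpose_mat U = 1\<^sub>m n" using c by (simp add: cmat_mult[of _ n n _ n] cmat_adj)
  have "cmat (adj U * U) = 1\<^sub>m n" using unitaryD(3)[OF assms] by simp
  thus "transpose_mat U * cmat U = 1\<^sub>m n" using c by (simp add: cmat_mult[of _ n n _ n] cmat_adj)
qed

lemma unitaryI_left:
  assumes "U \<in> carrier_mat n n" "adj U * U = 1\<^sub>m n"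
  shows "unitary_mat n U"
  using assms mat_mult_left_right_inverse[of "adj U" n U] by (auto simp: unitary_mat_def)

lemma unitary_mult:
  assumes "unitary_mat n U" "unitary_mat n V"
  shows "unitary_mat n (U * V)"
proof (rule unitaryI_left)
  note u = unitaryD[OF assms(1)] and v = unitaryD[OF assms(2)]
  show "U * V \<in> carrier_mat n n" using u v by auto
  have "adj (U * V) * (U * V) = adj V * ((adj U * U) * V)"
    using u v by (simp add: msq[where n=n] cancel_r[of "adj U" U n])
  also have "\<dots> = 1\<^sub>m n" using u v by (simp add: msq[where n=n])
  finally show "adj (U * V) * (U * V) = 1\<^sub>m n" .
qed

lemma unitary_adj:
  assumes "unitary_mat n U"
  shows "unitary_mat n (adj U)"
  using unitaryD[OF assms] by (auto simp: unitary_mat_def)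

lemma unitary_one: "unitary_mat n (1\<^sub>m n)"
  by (simp add: unitary_mat_def)


lemma cprod_self_real:
  fixes w :: "complex vec"
  assumes "w \<in> carrier_vec n" "w \<noteq> 0\<^sub>v n"
  shows "w \<bullet>c w = complex_of_real (Re (w \<bullet>c w))" "Re (w \<bullet>c w) > 0"
proof -
  have "w \<bullet>c w > 0" using assms by simp
  thus "w \<bullet>c w = complex_of_real (Re (w \<bullet>c w))" "Re (w \<bullet>c w) > 0"
    by (auto simp: less_complex_def complex_eq_iff)
qed

lemma unit_completion:
  fixes x :: "complex vec"
  assumes x: "x \<in> carrier_vec n" and nx: "x \<bullet>c x = 1"
  shows "\<exists>Q. unitary_mat n Q \<and> (\<forall>i<n. Q $$ (i,0) = x $ i)"
proof -
  have x0: "x \<noteq> 0\<^sub>v n" using nx x by auto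
  interpret cof_vec_space n "TYPE(complex)" .
  define b where "b = basis_completion x"
  from basis_completion[OF x x0, folded b_def]
  have dist_b: "distinct b" and indep: "\<not> lin_dep (set b)" and bc: "set b \<subseteq> carrier_vec n"
    and hdb: "hd b = x" and len_b: "length b = n" by auto
  have n0: "n > 0" using x0 x by (cases n) auto
  from hdb len_b n0 obtain vs where bv: "b = x # vs" by (cases b) auto
  define ws where "ws = gram_schmidt n b"
  from gram_schmidt_result[OF bc dist_b indep refl, folded ws_def]
  have ws: "set ws \<subseteq> carrier_vec n" "corthogonal ws" "length ws = n" by (auto simp: len_b)
  have hdws: "hd ws = x" unfolding ws_def bv using x by simp
  define c where "c = (\<lambda>w::complex vec. complex_of_real (1 / sqrt (Re (w \<bullet>c w))))"
  define ws' where "ws' = map (\<lambda>w. c w \<cdot>\<^sub>v w) ws"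
  define Q where "Q = mat_of_cols n ws'"
  have wsi: "ws ! i \<in> carrier_vec n" if "i < n" for i using ws that by auto
  have wsnz: "ws ! i \<noteq> 0\<^sub>v n" if "i < n" for i
  proof
    assume "ws ! i = 0\<^sub>v n"
    hence "ws ! i \<bullet>c ws ! i = 0" by simp
    with corthogonalD[OF ws(2), of i i] that ws(3) show False by auto
  qed
  have Qc: "Q \<in> carrier_mat n n" unfolding Q_def ws'_def using ws by auto
  have Qij: "Q $$ (i,j) = c (ws ! j) * (ws ! j $ i)" if "i < n" "j < n" for i j
    unfolding Q_def ws'_def using that ws wsi[of j] by (simp add: mat_of_cols_index)
  have "adj Q * Q = 1\<^sub>m n"
  proof (rule eq_matI)
    fix i j assume "i < dim_row (1\<^sub>m n)" "j < dim_col (1\<^sub>m n)"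
    hence ij: "i < n" "j < n" by auto
    have "(adj Q * Q) $$ (i,j) = (\<Sum>k\<in>{0..<n}. cnj (Q $$ (k,i)) * Q $$ (k,j))"
      using Qc ij by (simp add: scalar_prod_def)
    also have "\<dots> = (\<Sum>k\<in>{0..<n}. cnj (c (ws ! i)) * c (ws ! j) * ((ws ! j $ k) * cnj (ws ! i $ k)))"
      using ij by (intro sum.cong) (auto simp: Qij)
    also have "\<dots> = cnj (c (ws ! i)) * c (ws ! j) * (ws ! j \<bullet>c ws ! i)"
      using wsi[OF ij(1)] by (simp add: scalar_prod_def sum_distrib_left)
    also have "\<dots> = 1\<^sub>m n $$ (i,j)"
    proof (cases "i = j")
      case True
      note r = cprod_self_real[OF wsi[OF ij(1)] wsnz[OF ij(1)]]
      define t where "t = Re (ws ! i \<bullet>c ws ! i)"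
      have e: "ws ! i \<bullet>c ws ! i = complex_of_real t" using r(1) t_def by simp
      have tp: "t > 0" using r(2) t_def by simp
      have cc: "c (ws ! i) = complex_of_real (1 / sqrt t)" unfolding c_def t_def ..
      have "cnj (c (ws ! i)) * c (ws ! i) * (ws ! i \<bullet>c ws ! i)
         = complex_of_real (1 / sqrt t) * complex_of_real (1 / sqrt t) * complex_of_real t"
        unfolding cc e by simp
      also have "\<dots> = complex_of_real ((1 / sqrt t) * (1 / sqrt t) * t)" by (simp only: of_real_mult)
      also have "(1 / sqrt t) * (1 / sqrt t) * t = 1" using tp
        by (simp add: field_simps real_sqrt_mult_self abs_of_pos)
      finally show ?thesis using True ij by simp
    next
      case False
      with corthogonalD[OF ws(2), of j i] ij ws(3) show ?thesis by simp
    qed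
    finally show "(adj Q * Q) $$ (i,j) = 1\<^sub>m n $$ (i,j)" .
  qed (use Qc in auto)
  hence U: "unitary_mat n Q" using Qc by (rule unitaryI_left[rotated])
  have ws0: "ws ! 0 = x" using hdws n0 ws(3) by (cases ws) auto
  have c0: "c x = 1" unfolding c_def using nx by simp
  have "\<forall>i<n. Q $$ (i,0) = x $ i" using Qij n0 ws0 c0 by simp
  with U show ?thesis by blast
qed


lemma mv_index:
  assumes "A \<in> carrier_mat n m" "v \<in> carrier_vec m" "i < n"
  shows "(A *\<^sub>v v) $ i = (\<Sum>j<m. A $$ (i,j) * v $ j)"
  using assms by (auto simp: scalar_prod_def atLeast0LessThan intro!: sum.cong)

lemma cprod_sum:
  fixes v w :: "complex vec"
  assumes "v \<in> carrier_vec n" "w \<in> carrier_vec n"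
  shows "v \<bullet>c w = (\<Sum>i<n. v $ i * cnj (w $ i))"
  using assms by (auto simp: scalar_prod_def atLeast0LessThan)

lemma adj_sprod:
  fixes A :: "complex mat"
  assumes A: "A \<in> carrier_mat n n" and a: "a \<in> carrier_vec n" and y: "y \<in> carrier_vec n"
  shows "(A *\<^sub>v a) \<bullet>c y = a \<bullet>c (adj A *\<^sub>v y)"
proof -
  have "(A *\<^sub>v a) \<bullet>c y = (\<Sum>i<n. (\<Sum>j<n. A $$ (i,j) * a $ j) * cnj (y $ i))"
    using assms by (simp add: cprod_sum[of _ n] mv_index[of _ n n] del: index_mult_mat_vec)
  also have "\<dots> = (\<Sum>i<n. \<Sum>j<n. A $$ (i,j) * a $ j * cnj (y $ i))"
    by (simp add: sum_distrib_right)
  also have "\<dots> = (\<Sum>j<n. \<Sum>i<n. A $$ (i,j) * a $ j * cnj (y $ i))"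
    by (rule sum.swap)
  also have "\<dots> = (\<Sum>j<n. a $ j * cnj (\<Sum>i<n. cnj (A $$ (i,j)) * y $ i))"
    by (simp add: sum_distrib_left ac_simps)
  also have "\<dots> = (\<Sum>j<n. a $ j * cnj ((adj A *\<^sub>v y) $ j))"
  proof (intro sum.cong refl)
    fix j assume j: "j \<in> {..<n}"
    have "(adj A *\<^sub>v y) $ j = (\<Sum>i<n. adj A $$ (j,i) * y $ i)"
      using assms j by (simp add: mv_index[of _ n n] del: index_mult_mat_vec)
    also have "\<dots> = (\<Sum>i<n. cnj (A $$ (i,j)) * y $ i)"
      using assms j by (intro sum.cong refl) auto
    finally show "a $ j * cnj (\<Sum>i<n. cnj (A $$ (i,j)) * y $ i) = a $ j * cnj ((adj A *\<^sub>v y) $ j)" by simp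
  qed
  also have "\<dots> = a \<bullet>c (adj A *\<^sub>v y)"
    using assms by (simp add: cprod_sum[of _ n])
  finally show ?thesis .
qed

lemma conj_mv:
  fixes A :: "complex mat"
  assumes A: "A \<in> carrier_mat n m" and v: "v \<in> carrier_vec m"
  shows "conjugate (A *\<^sub>v v) = cmat A *\<^sub>v conjugate v"
  by (rule eq_vecI) (use assms in \<open>auto simp: mv_index[of _ n m] cnj_sum simp del: index_mult_mat_vec\<close>)

lemma anti_eig:
  fixes Z :: "complex mat"
  assumes Z: "Z \<in> carrier_mat n n" and n: "n > 0" and sym: "transpose_mat Z = Z"
  shows "\<exists>x \<sigma>. x \<in> carrier_vec n \<and> x \<bullet>c x = 1 \<and> \<sigma> \<ge> 0 \<and>
            Z *\<^sub>v conjugate x = complex_of_real \<sigma> \<cdot>\<^sub>v x"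
proof -
  define N where "N = Z * cmat Z"
  have Nc: "N \<in> carrier_mat n n" using Z unfolding N_def by simp
  from spectrum_non_empty[OF Nc n] obtain lam where "lam \<in> spectrum N" by blast
  then obtain y where ev: "eigenvector N y lam" unfolding spectrum_def eigenvalue_def by auto
  hence y: "y \<in> carrier_vec n" and y0: "y \<noteq> 0\<^sub>v n" and Ny: "N *\<^sub>v y = lam \<cdot>\<^sub>v y"
    using Nc unfolding eigenvector_def by auto
  define w where "w = cmat Z *\<^sub>v y"
  have w: "w \<in> carrier_vec n" using Z y unfolding w_def by simp
  have adjZ: "adj Z = cmat Z" unfolding adj_def sym ..
  have Ny2: "N *\<^sub>v y = Z *\<^sub>v w" unfolding N_def w_def using Z y by simp
  have "lam * (y \<bullet>c y) = (lam \<cdot>\<^sub>v y) \<bullet>c y" using y by simp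
  also have "\<dots> = (Z *\<^sub>v w) \<bullet>c y" using Ny Ny2 by simp
  also have "\<dots> = w \<bullet>c w" using adj_sprod[OF Z w y] adjZ w_def by simp
  finally have lam_eq: "lam * (y \<bullet>c y) = w \<bullet>c w" .
  have ypos: "y \<bullet>c y > 0" using y y0 by simp
  have wnn: "w \<bullet>c w \<ge> 0" by auto
  have wr: "w \<bullet>c w = complex_of_real (Re (w \<bullet>c w))" "Re (w \<bullet>c w) \<ge> 0"
    using wnn by (auto simp: less_eq_complex_def complex_eq_iff)
  have yr: "y \<bullet>c y = complex_of_real (Re (y \<bullet>c y))" "Re (y \<bullet>c y) > 0"
    using cprod_self_real[OF y y0] by auto
  have "lam = complex_of_real (Re (w \<bullet>c w) / Re (y \<bullet>c y))"
    using lam_eq yr wr by (metis nonzero_eq_divide_eq of_real_divide of_real_eq_0_iff less_irrefl)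
  hence lamr: "lam = complex_of_real (Re lam)" "Re lam \<ge> 0"
    using wr(2) yr(2) by auto
  define \<sigma> where "\<sigma> = sqrt (Re lam)"
  have sig: "\<sigma> \<ge> 0" "complex_of_real \<sigma> * complex_of_real \<sigma> = lam"
    unfolding \<sigma>_def using lamr by (auto simp flip: of_real_mult)
  define u where "u = Z *\<^sub>v conjugate y"
  have u: "u \<in> carrier_vec n" using Z y unfolding u_def by simp
  have cu: "conjugate u = w" unfolding u_def w_def using conj_mv[OF Z, of "conjugate y"] y by simp
  define x0 where "x0 = u + complex_of_real \<sigma> \<cdot>\<^sub>v y"
  have x0: "x0 \<in> carrier_vec n" using u y unfolding x0_def by simp
  have "Z *\<^sub>v conjugate x0 = Z *\<^sub>v (w + complex_of_real \<sigma> \<cdot>\<^sub>v conjugate y)"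
    unfolding x0_def using u y cu by (simp add: conjugate_add_vec[of _ n] conjugate_smult_vec)
  also have "\<dots> = Z *\<^sub>v w + complex_of_real \<sigma> \<cdot>\<^sub>v u"
    unfolding u_def using Z w y by (simp add: mult_add_distrib_mat_vec[of _ n n] mult_mat_vec[of _ n n])
  also have "\<dots> = complex_of_real \<sigma> \<cdot>\<^sub>v x0"
  proof (rule eq_vecI)
    fix i assume "i < dim_vec (complex_of_real \<sigma> \<cdot>\<^sub>v x0)"
    hence i: "i < n" using x0 by simp
    have "(Z *\<^sub>v w) $ i = lam * y $ i" using Ny Ny2 y i by (metis carrier_vecD index_smult_vec(1))
    hence "(Z *\<^sub>v w + complex_of_real \<sigma> \<cdot>\<^sub>v u) $ i = lam * y $ i + complex_of_real \<sigma> * u $ i"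
      using i u w Z by (simp del: index_mult_mat_vec)
    moreover have "(complex_of_real \<sigma> \<cdot>\<^sub>v x0) $ i = complex_of_real \<sigma> * (u $ i + complex_of_real \<sigma> * y $ i)"
      using i u y unfolding x0_def by simp
    ultimately show "(Z *\<^sub>v w + complex_of_real \<sigma> \<cdot>\<^sub>v u) $ i = (complex_of_real \<sigma> \<cdot>\<^sub>v x0) $ i"
      by (simp add: sig(2)[symmetric] algebra_simps)
  qed (use x0 Z w u in auto)
  finally have x0ev: "Z *\<^sub>v conjugate x0 = complex_of_real \<sigma> \<cdot>\<^sub>v x0" .
  obtain x1 where x1: "x1 \<in> carrier_vec n" "x1 \<noteq> 0\<^sub>v n" "Z *\<^sub>v conjugate x1 = complex_of_real \<sigma> \<cdot>\<^sub>v x1"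
  proof (cases "x0 = 0\<^sub>v n")
    case False thus ?thesis using that x0 x0ev by blast
  next
    case True
    have uy: "u = - (complex_of_real \<sigma> \<cdot>\<^sub>v y)"
    proof (rule eq_vecI)
      fix i assume "i < dim_vec (- (complex_of_real \<sigma> \<cdot>\<^sub>v y))"
      hence i: "i < n" using y by simp
      have "x0 $ i = 0" using True i by simp
      thus "u $ i = (- (complex_of_real \<sigma> \<cdot>\<^sub>v y)) $ i" using i u y unfolding x0_def
        by (simp add: eq_neg_iff_add_eq_0)
    qed (use u y in auto)
    define x1 where "x1 = \<i> \<cdot>\<^sub>v y"
    have "Z *\<^sub>v conjugate x1 = Z *\<^sub>v ((- \<i>) \<cdot>\<^sub>v conjugate y)"
      unfolding x1_def by (simp add: conjugate_smult_vec)
    also have "\<dots> = (- \<i>) \<cdot>\<^sub>v u" unfolding u_def using Z y by (simp add: mult_mat_vec[of _ n n])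
    also have "\<dots> = complex_of_real \<sigma> \<cdot>\<^sub>v x1"
      unfolding uy x1_def by (rule eq_vecI) (use y in auto)
    finally have "Z *\<^sub>v conjugate x1 = complex_of_real \<sigma> \<cdot>\<^sub>v x1" .
    moreover have "x1 \<in> carrier_vec n" using y unfolding x1_def by simp
    moreover have "x1 \<noteq> 0\<^sub>v n"
    proof
      assume "x1 = 0\<^sub>v n"
      hence "(- \<i>) \<cdot>\<^sub>v x1 = 0\<^sub>v n" by (intro eq_vecI) auto
      moreover have "(- \<i>) \<cdot>\<^sub>v x1 = y" unfolding x1_def by (rule eq_vecI) auto
      ultimately show False using y0 by simp
    qed
    ultimately show ?thesis using that by blast
  qed
  note r = cprod_self_real[OF x1(1,2)]
  define t where "t = Re (x1 \<bullet>c x1)"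
  have tp: "t > 0" using r(2) t_def by simp
  have e: "x1 \<bullet>c x1 = complex_of_real t" using r(1) t_def by simp
  define c where "c = complex_of_real (1 / sqrt t)"
  define x where "x = c \<cdot>\<^sub>v x1"
  have xc: "x \<in> carrier_vec n" using x1 unfolding x_def by simp
  have "x \<bullet>c x = c * cnj c * (x1 \<bullet>c x1)"
    unfolding x_def using x1 by (simp add: conjugate_smult_vec)
  also have "\<dots> = complex_of_real ((1 / sqrt t) * (1 / sqrt t) * t)"
    unfolding e c_def by (simp only: complex_cnj_complex_of_real of_real_mult)
  also have "(1 / sqrt t) * (1 / sqrt t) * t = 1" using tp
    by (simp add: field_simps real_sqrt_mult_self abs_of_pos)
  finally have xn: "x \<bullet>c x = 1" by simp
  have "Z *\<^sub>v conjugate x = Z *\<^sub>v (c \<cdot>\<^sub>v conjugate x1)"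
    unfolding x_def c_def by (simp add: conjugate_smult_vec)
  also have "\<dots> = c \<cdot>\<^sub>v (complex_of_real \<sigma> \<cdot>\<^sub>v x1)" using Z x1 by (simp add: mult_mat_vec[of _ n n])
  also have "\<dots> = complex_of_real \<sigma> \<cdot>\<^sub>v x" unfolding x_def by (rule eq_vecI) auto
  finally show ?thesis using xc xn sig(1) by blast
qed

lemma mm_index:
  assumes "A \<in> carrier_mat n k" "B \<in> carrier_mat k m" "i < n" "j < m"
  shows "(A * B) $$ (i,j) = (\<Sum>l<k. A $$ (i,l) * B $$ (l,j))"
  using assms by (auto simp: scalar_prod_def atLeast0LessThan intro!: sum.cong)

lemma takagi:
  fixes Z :: "complex mat"
  assumes "Z \<in> carrier_mat n n" "transpose_mat Z = Z"
  shows "\<exists>W \<sigma>. unitary_mat n W \<and> (\<forall>i. \<sigma> i \<ge> 0) \<and> Z = W * diagR n \<sigma> * transpose_mat W"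
  using assms
proof (induction n arbitrary: Z)
  case 0
  have "Z = 1\<^sub>m 0 * diagR 0 (\<lambda>_. 0) * transpose_mat (1\<^sub>m 0)"
    using 0 by (intro eq_matI) auto
  thus ?case using unitary_one[of 0]
    by (intro exI[of _ "1\<^sub>m 0"] exI[of _ "\<lambda>_. 0::real"]) auto
next
  case (Suc n Z)
  define m where "m = Suc n"
  have Z: "Z \<in> carrier_mat m m" and sym: "transpose_mat Z = Z" using Suc.prems m_def by auto
  obtain x \<sigma> where x: "x \<in> carrier_vec m" "x \<bullet>c x = 1" "\<sigma> \<ge> 0"
    "Z *\<^sub>v conjugate x = complex_of_real \<sigma> \<cdot>\<^sub>v x"
    using anti_eig[OF Z _ sym] m_def by auto
  obtain Q where Q: "unitary_mat m Q" and Qx: "\<forall>i<m. Q $$ (i,0) = x $ i"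
    using unit_completion[OF x(1,2)] by blast
  note q = unitaryD[OF Q]
  have Qc: "Q \<in> carrier_mat m m" using q by simp
  have m0: "0 < m" unfolding m_def by simp
  define Z' where "Z' = adj Q * Z * cmat Q"
  have Z'c: "Z' \<in> carrier_mat m m" using Qc Z unfolding Z'_def by simp
  have symZ': "transpose_mat Z' = Z'"
    unfolding Z'_def using Qc Z sym by (simp add: msq[where n=m] mcon)
  have ZcQ: "(Z * cmat Q) $$ (k,0) = complex_of_real \<sigma> * Q $$ (k,0)" if k: "k < m" for k
  proof -
    have "(Z * cmat Q) $$ (k,0) = (\<Sum>l<m. Z $$ (k,l) * cnj (Q $$ (l,0)))"
      using Z Qc k m0 by (simp add: mm_index[of _ m m _ m] del: index_mult_mat)
    also have "\<dots> = (\<Sum>l<m. Z $$ (k,l) * conjugate x $ l)"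
      using x(1) Qx by (intro sum.cong refl) auto
    also have "\<dots> = (Z *\<^sub>v conjugate x) $ k"
      using Z x(1) k by (simp add: mv_index[of _ m m] del: index_mult_mat_vec)
    also have "\<dots> = complex_of_real \<sigma> * Q $$ (k,0)" using x(1,4) k Qx m_def by simp
    finally show ?thesis .
  qed
  have col0: "Z' $$ (i,0) = (if i = 0 then complex_of_real \<sigma> else 0)" if i: "i < m" for i
  proof -
    have "Z' $$ (i,0) = (\<Sum>k<m. adj Q $$ (i,k) * (Z * cmat Q) $$ (k,0))"
      unfolding Z'_def using Z Qc i m_def by (simp add: mm_index[of _ m m _ m] del: index_mult_mat)
    also have "\<dots> = complex_of_real \<sigma> * (\<Sum>k<m. adj Q $$ (i,k) * Q $$ (k,0))"
      by (simp add: ZcQ sum_distrib_left ac_simps)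
    also have "(\<Sum>k<m. adj Q $$ (i,k) * Q $$ (k,0)) = (adj Q * Q) $$ (i,0)"
      using Qc i m_def by (simp add: mm_index[of _ m m _ m] del: index_mult_mat)
    also have "\<dots> = (if i = 0 then 1 else 0)" using q i m_def by simp
    finally show ?thesis by simp
  qed
  have Z'sym: "Z' $$ (i,j) = Z' $$ (j,i)" if "i < m" "j < m" for i j
    using arg_cong[OF symZ', of "\<lambda>A. A $$ (j,i)"] that Z'c by simp
  define Z3 where "Z3 = mat n n (\<lambda>(i,j). Z' $$ (Suc i, Suc j))"
  have Z3c: "Z3 \<in> carrier_mat n n" unfolding Z3_def by simp
  have sym3: "transpose_mat Z3 = Z3"
    unfolding Z3_def by (rule eq_matI) (auto simp: Z'sym m_def)
  obtain W3 \<sigma>3 where W3: "unitary_mat n W3" "\<forall>i. \<sigma>3 i \<ge> 0" "Z3 = W3 * diagR n \<sigma>3 * transpose_mat W3"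
    using Suc.IH[OF Z3c sym3] by blast
  note w3 = unitaryD[OF W3(1)]
  define P where "P = mat m m (\<lambda>(i,j). if i = 0 \<and> j = 0 then 1 else if i = 0 \<or> j = 0 then 0
                                     else W3 $$ (i - 1, j - 1))"
  have Pc: "P \<in> carrier_mat m m" unfolding P_def by simp
  have P0: "P $$ (0,j) = (if j = 0 then 1 else 0)" "P $$ (j,0) = (if j = 0 then 1 else 0)"
    if "j < m" for j using that unfolding P_def m_def by auto
  have PS: "P $$ (Suc i, Suc j) = W3 $$ (i,j)" if "i < n" "j < n" for i j
    using that unfolding P_def m_def by auto
  have "adj P * P = 1\<^sub>m m"
  proof (rule eq_matI)
    fix i j assume "i < dim_row (1\<^sub>m m)" "j < dim_col (1\<^sub>m m)"
    hence ij: "i < m" "j < m" by auto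
    have e: "(adj P * P) $$ (i,j) = (\<Sum>k<m. cnj (P $$ (k,i)) * P $$ (k,j))"
      using Pc ij by (simp add: mm_index[of _ m m _ m] del: index_mult_mat)
    also have "\<dots> = cnj (P $$ (0,i)) * P $$ (0,j) + (\<Sum>k<n. cnj (P $$ (Suc k,i)) * P $$ (Suc k,j))"
      unfolding m_def by (rule sum.lessThan_Suc_shift)
    also have "\<dots> = 1\<^sub>m m $$ (i,j)"
    proof (cases i)
      case 0 thus ?thesis using ij P0 by (cases j) (auto simp: m_def)
    next
      case (Suc i')
      show ?thesis
      proof (cases j)
        case 0 thus ?thesis using ij P0 Suc by (auto simp: m_def)
      next
        case (Suc j')
        have "(\<Sum>k<n. cnj (P $$ (Suc k,i)) * P $$ (Suc k,j)) = (\<Sum>k<n. cnj (W3 $$ (k,i')) * W3 $$ (k,j'))"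
          using ij \<open>i = Suc i'\<close> Suc by (intro sum.cong refl) (simp add: PS m_def)
        also have "\<dots> = (adj W3 * W3) $$ (i',j')"
          using w3(1) ij \<open>i = Suc i'\<close> Suc m_def by (simp add: mm_index[of _ n n _ n] del: index_mult_mat)
        also have "\<dots> = (if i' = j' then 1 else 0)" unfolding w3(3) using ij \<open>i = Suc i'\<close> Suc m_def by simp
        finally show ?thesis using ij \<open>i = Suc i'\<close> Suc P0 by (simp add: m_def)
      qed
    qed
    finally show "(adj P * P) $$ (i,j) = 1\<^sub>m m $$ (i,j)" .
  qed (use Pc in auto)
  hence PU: "unitary_mat m P" using Pc by (rule unitaryI_left[rotated])
  define \<sigma>' where "\<sigma>' = (\<lambda>i. if i = 0 then \<sigma> else \<sigma>3 (i - 1))"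
  have \<sigma>'nn: "\<forall>i. \<sigma>' i \<ge> 0" unfolding \<sigma>'_def using x(3) W3(2) by auto
  have Z'eq: "Z' = P * diagR m \<sigma>' * transpose_mat P"
  proof (rule eq_matI)
    fix i j assume "i < dim_row (P * diagR m \<sigma>' * transpose_mat P)" "j < dim_col (P * diagR m \<sigma>' * transpose_mat P)"
    hence ij: "i < m" "j < m" using Pc by auto
    have "(P * diagR m \<sigma>' * transpose_mat P) $$ (i,j) = (\<Sum>k<m. P $$ (i,k) * complex_of_real (\<sigma>' k) * P $$ (j,k))"
      by (rule diag_sandwich_entry[OF Pc Pc ij])
    also have "\<dots> = P $$ (i,0) * complex_of_real \<sigma> * P $$ (j,0) +
        (\<Sum>k<n. P $$ (i,Suc k) * complex_of_real (\<sigma>3 k) * P $$ (j,Suc k))"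
      unfolding m_def by (subst sum.lessThan_Suc_shift) (simp add: \<sigma>'_def)
    also have "\<dots> = Z' $$ (i,j)"
    proof (cases i)
      case 0
      thus ?thesis using ij P0 col0[of j] col0[of 0] Z'sym[of 0 j] by (cases j) (auto simp: m_def)
    next
      case (Suc i')
      show ?thesis
      proof (cases j)
        case 0 thus ?thesis using ij P0 col0 Suc by (auto simp: m_def)
      next
        case (Suc j')
        have "(\<Sum>k<n. P $$ (i,Suc k) * complex_of_real (\<sigma>3 k) * P $$ (j,Suc k))
             = (\<Sum>k<n. W3 $$ (i',k) * complex_of_real (\<sigma>3 k) * W3 $$ (j',k))"
          using ij \<open>i = Suc i'\<close> Suc by (intro sum.cong refl) (simp add: PS m_def)
        also have "\<dots> = Z3 $$ (i',j')"
          unfolding W3(3) using w3 ij \<open>i = Suc i'\<close> Suc m_def by (subst diag_sandwich_entry) auto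
        also have "\<dots> = Z' $$ (i,j)" unfolding Z3_def using ij \<open>i = Suc i'\<close> Suc m_def by simp
        finally show ?thesis using ij \<open>i = Suc i'\<close> Suc P0 by (simp add: m_def)
      qed
    qed
    finally show "Z' $$ (i,j) = (P * diagR m \<sigma>' * transpose_mat P) $$ (i,j)" by simp
  qed (use Pc Z'c in auto)
  have ZQ: "Z = Q * Z' * transpose_mat Q"
  proof -
    have "Q * Z' * transpose_mat Q = Q * (adj Q * (Z * (cmat Q * transpose_mat Q)))"
      unfolding Z'_def using Qc Z by (simp add: msq[where n=m])
    also have "\<dots> = Z * (cmat Q * transpose_mat Q)"
      using Qc Z q by (intro cancel_r[of Q "adj Q" m _ m]) auto
    also have "\<dots> = Z" using unitary_cmat_transpose[OF Q] Z by simp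
    finally show ?thesis by simp
  qed
  have "Z = (Q * P) * diagR m \<sigma>' * transpose_mat (Q * P)"
    unfolding ZQ Z'eq using Qc Pc by (simp add: msq[where n=m])
  moreover have "unitary_mat m (Q * P)" using Q PU by (rule unitary_mult)
  ultimately show ?case using \<sigma>'nn m_def by blast
qed

lemma diag_rank:
  fixes F H :: "complex mat"
  assumes DFH: "diagR n \<sigma> = F * H" and F: "F \<in> carrier_mat n m" and H: "H \<in> carrier_mat m n"
  shows "card {i. i < n \<and> \<sigma> i \<noteq> 0} \<le> m"
proof (rule ccontr)
  define S where "S = {i. i < n \<and> \<sigma> i \<noteq> 0}"
  define k where "k = card S"
  assume "\<not> card {i. i < n \<and> \<sigma> i \<noteq> 0} \<le> m"
  hence mk: "m < k" unfolding k_def S_def by simp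
  have finS: "finite S" unfolding S_def by simp
  obtain e where e: "bij_betw e {0..<k} S" using ex_bij_betw_nat_finite[OF finS] k_def by blast
  have eS: "e a < n" "\<sigma> (e a) \<noteq> 0" if "a < k" for a
    using e that unfolding bij_betw_def S_def by auto
  have einj: "e a = e b \<longleftrightarrow> a = b" if "a < k" "b < k" for a b
    using e that unfolding bij_betw_def inj_on_def by auto
  define Dk where "Dk = mat k k (\<lambda>(a,b). if a = b then complex_of_real (\<sigma> (e a)) else 0)"
  define Fk where "Fk = mat k k (\<lambda>(a,c). if c < m then F $$ (e a, c) else 0)"
  define Hk where "Hk = mat k k (\<lambda>(c,b). if c < m then H $$ (c, e b) else 0)"
  have Dkc: "Dk \<in> carrier_mat k k" and Fkc: "Fk \<in> carrier_mat k k" and Hkc: "Hk \<in> carrier_mat k k"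
    unfolding Dk_def Fk_def Hk_def by auto
  have "Dk = Fk * Hk"
  proof (rule eq_matI)
    fix a b assume "a < dim_row (Fk * Hk)" "b < dim_col (Fk * Hk)"
    hence ab: "a < k" "b < k" using Fkc Hkc by auto
    have "(Fk * Hk) $$ (a,b) = (\<Sum>c<k. Fk $$ (a,c) * Hk $$ (c,b))"
      using Fkc Hkc ab by (simp add: mm_index[of _ k k _ k] del: index_mult_mat)
    also have "\<dots> = (\<Sum>c<k. if c < m then F $$ (e a, c) * H $$ (c, e b) else 0)"
      using ab unfolding Fk_def Hk_def by (intro sum.cong refl) auto
    also have "\<dots> = (\<Sum>c\<in>{c\<in>{..<k}. c < m}. F $$ (e a, c) * H $$ (c, e b))"
      by (rule sum.inter_filter[symmetric]) simp
    also have "{c\<in>{..<k}. c < m} = {..<m}" using mk by auto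
    also have "(\<Sum>c<m. F $$ (e a, c) * H $$ (c, e b)) = (F * H) $$ (e a, e b)"
      using F H eS ab by (simp add: mm_index[of _ n m _ n] del: index_mult_mat)
    also have "\<dots> = diagR n \<sigma> $$ (e a, e b)" using DFH by simp
    also have "\<dots> = Dk $$ (a,b)" using ab eS einj unfolding Dk_def diagR_def by auto
    finally show "Dk $$ (a,b) = (Fk * Hk) $$ (a,b)" by simp
  qed (use Dkc Fkc Hkc in auto)
  hence "det Dk = det Fk * det Hk" using det_mult[OF Fkc Hkc] by simp
  moreover have "det Fk = 0"
  proof -
    define v :: "complex vec" where "v = unit_vec k (k - 1)"
    have v: "v \<in> carrier_vec k" "v \<noteq> 0\<^sub>v k" using mk unfolding v_def
      by (auto simp: unit_vec_def vec_eq_iff)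
    have "Fk *\<^sub>v v = 0\<^sub>v k"
    proof (rule eq_vecI)
      fix a assume "a < dim_vec (0\<^sub>v k :: complex vec)"
      hence a: "a < k" by simp
      have "(Fk *\<^sub>v v) $ a = (\<Sum>c<k. Fk $$ (a,c) * v $ c)"
        using Fkc v a by (simp add: mv_index[of _ k k] del: index_mult_mat_vec)
      also have "\<dots> = 0" using a mk unfolding Fk_def v_def by (intro sum.neutral) auto
      finally show "(Fk *\<^sub>v v) $ a = 0\<^sub>v k $ a" using a by simp
    qed (use Fkc in auto)
    thus ?thesis using det_0_iff_vec_prod_zero[OF Fkc] v by blast
  qed
  moreover have "det Dk \<noteq> 0"
  proof
    assume "det Dk = 0"
    then obtain v where v: "v \<in> carrier_vec k" "v \<noteq> 0\<^sub>v k" "Dk *\<^sub>v v = 0\<^sub>v k"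
      using det_0_iff_vec_prod_zero[OF Dkc] by blast
    have "v = 0\<^sub>v k"
    proof (rule eq_vecI)
      fix a assume "a < dim_vec (0\<^sub>v k :: complex vec)"
      hence a: "a < k" by simp
      have "(Dk *\<^sub>v v) $ a = (\<Sum>c<k. Dk $$ (a,c) * v $ c)"
        using Dkc v(1) a by (simp add: mv_index[of _ k k] del: index_mult_mat_vec)
      also have "\<dots> = (\<Sum>c<k. if c = a then complex_of_real (\<sigma> (e a)) * v $ a else 0)"
        using a unfolding Dk_def by (intro sum.cong refl) auto
      also have "\<dots> = complex_of_real (\<sigma> (e a)) * v $ a" using a by simp
      finally have "complex_of_real (\<sigma> (e a)) * v $ a = 0" using v(3) a by simp
      thus "v $ a = 0\<^sub>v k $ a" using eS[OF a] a by simp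
    qed (use v in auto)
    with v(2) show False by simp
  qed
  ultimately show False by simp
qed

lemma diagR_cong: "(\<And>i. i < n \<Longrightarrow> a i = b i) \<Longrightarrow> diagR n a = diagR n b"
  unfolding diagR_def by (rule eq_matI) auto

lemma diagR_mult: "diagR n a * diagR n b = diagR n (\<lambda>i. a i * b i)"
proof -
  have "diagR n a * diagR n b = mat n n (\<lambda>(i,k). diagR n a $$ (i,k) * complex_of_real (b k))"
    by (rule mult_diagR) simp
  thus ?thesis by (simp add: diagR_def) (rule eq_matI, auto)
qed

lemma diagR_one: "diagR n (\<lambda>_. 1) = 1\<^sub>m n"
  unfolding diagR_def by (rule eq_matI) auto

lemma adj_diagR[simp]: "adj (diagR n a) = diagR n a"
  unfolding diagR_def by (rule eq_matI) auto
lemma cmat_diagR[simp]: "cmat (diagR n a) = diagR n a"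
  unfolding diagR_def by (rule eq_matI) auto
lemma transpose_diagR[simp]: "transpose_mat (diagR n a) = diagR n a"
  unfolding diagR_def by (rule eq_matI) auto

lemma one_minus_diagR: "1\<^sub>m n - diagR n a = diagR n (\<lambda>i. 1 - a i)"
  unfolding diagR_def by (rule eq_matI) auto

lemma squeezer_diag: "squeezer n r = (diagR n (\<lambda>i. cosh (r i)), diagR n (\<lambda>i. sinh (r i)))"
  unfolding squeezer_def diagR_def by simp

lemma diag_both_entry:
  assumes X: "X \<in> carrier_mat n n" and ij: "i < n" "j < n"
  shows "(diagR n a * X * diagR n b) $$ (i,j) = complex_of_real (a i) * X $$ (i,j) * complex_of_real (b j)"
proof -
  have "diagR n a * X \<in> carrier_mat n n" using X by simp
  hence "(diagR n a * X * diagR n b) $$ (i,j) = (diagR n a * X) $$ (i,j) * complex_of_real (b j)"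
    using ij by (simp add: mult_diagR)
  also have "(diagR n a * X) $$ (i,j) = (\<Sum>k<n. diagR n a $$ (i,k) * X $$ (k,j))"
    using X ij by (simp add: mm_index[of _ n n _ n] del: index_mult_mat)
  also have "\<dots> = (\<Sum>k<n. if k = i then complex_of_real (a i) * X $$ (i,j) else 0)"
    using ij by (intro sum.cong refl) (auto simp: diagR_def)
  also have "\<dots> = complex_of_real (a i) * X $$ (i,j)" using ij by simp
  finally show ?thesis .
qed

lemma rowrel_inv:
  assumes rr: "rowrel n (A,B)"
  shows "\<exists>Ai. Ai \<in> carrier_mat n n \<and> A * Ai = 1\<^sub>m n \<and> Ai * A = 1\<^sub>m n"
proof -
  have c: "A \<in> carrier_mat n n" "B \<in> carrier_mat n n" and R1: "A * adj A - B * adj B = 1\<^sub>m n"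
    using rr by (auto simp: rowrel_def)
  have AA: "A * adj A = 1\<^sub>m n + B * adj B"
  proof (rule mat_eq_ent[of _ n])
    fix i j assume ij: "i < n" "j < n"
    from arg_cong[OF R1, of "ent i j"] ij c
    show "ent i j (A * adj A) = ent i j (1\<^sub>m n + B * adj B)"
      by (simp add: ent_simps[where n=n] algebra_simps)
  qed (use c in auto)
  have "det A \<noteq> 0"
  proof
    assume dA: "det A = 0"
    have "det (A * adj A) = det A * det (adj A)" using c by (simp add: det_mult[of _ n])
    hence "det (A * adj A) = 0" using dA by simp
    then obtain v where v: "v \<in> carrier_vec n" "v \<noteq> 0\<^sub>v n" "(A * adj A) *\<^sub>v v = 0\<^sub>v n"
      using det_0_iff_vec_prod_zero[of "A * adj A" n] c by auto
    define u where "u = adj B *\<^sub>v v"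
    have u: "u \<in> carrier_vec n" using c v unfolding u_def by simp
    have "(A * adj A) *\<^sub>v v = v + B *\<^sub>v u"
      unfolding AA u_def using c v by (simp add: add_mult_distrib_mat_vec[of _ n n])
    hence "v + B *\<^sub>v u = 0\<^sub>v n" using v(3) by simp
    hence "(v + B *\<^sub>v u) \<bullet>c v = 0" using v(1) by simp
    hence "v \<bullet>c v + (B *\<^sub>v u) \<bullet>c v = 0"
      using v u c by (simp add: add_scalar_prod_distrib[of _ n])
    also have "(B *\<^sub>v u) \<bullet>c v = u \<bullet>c u" using adj_sprod[OF c(2) u v(1)] u_def by simp
    finally have s: "v \<bullet>c v + u \<bullet>c u = 0" .
    have "v \<bullet>c v \<ge> 0" "u \<bullet>c u \<ge> 0" by auto
    with s have "v \<bullet>c v = 0" by (simp add: add_nonneg_eq_0_iff)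
    with v show False by simp
  qed
  from det_non_zero_imp_unit[OF c(1) this, of "()"]
  show ?thesis unfolding Units_def by (auto simp: ring_mat_simps)
qed

lemma bm_decomp:
  fixes A B F H :: "complex mat"
  assumes rr: "rowrel n (A,B)" and Fc: "F \<in> carrier_mat n m" and Hc: "H \<in> carrier_mat m n"
    and BFH: "B = F * H"
  shows "\<exists>U V r. unitary_mat n U \<and> unitary_mat n V \<and> card {i. i < n \<and> r i \<noteq> 0} \<le> m \<and>
          A = U * diagR n (\<lambda>i. cosh (r i)) * V \<and> B = U * diagR n (\<lambda>i. sinh (r i)) * cmat V"
proof -
  have c: "A \<in> carrier_mat n n" "B \<in> carrier_mat n n" and R1: "A * adj A - B * adj B = 1\<^sub>m n"
    and R2: "A * transpose_mat B = B * transpose_mat A"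
    using rr by (auto simp: rowrel_def)
  note ms = msq[where n=n] mcon
  obtain Ai where Ai: "Ai \<in> carrier_mat n n" "A * Ai = 1\<^sub>m n" "Ai * A = 1\<^sub>m n"
    using rowrel_inv[OF rr] by blast
  define Z where "Z = Ai * B"
  have Zc: "Z \<in> carrier_mat n n" using Ai c unfolding Z_def by simp
  have tAAi: "transpose_mat A * transpose_mat Ai = 1\<^sub>m n"
    using arg_cong[OF Ai(3), of transpose_mat] Ai(1) c by (simp add: ms)
  have adjAAi: "adj A * adj Ai = 1\<^sub>m n"
    using arg_cong[OF Ai(3), of adj] Ai(1) c by (simp add: ms)
  have symZ: "transpose_mat Z = Z"
  proof -
    have "transpose_mat Z = transpose_mat B * transpose_mat Ai" unfolding Z_def using Ai c by (simp add: ms)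
    also have "\<dots> = Ai * (A * (transpose_mat B * transpose_mat Ai))"
      using Ai c by (intro cancel_r[symmetric, of Ai A n _ n]) auto
    also have "\<dots> = Ai * (B * (transpose_mat A * transpose_mat Ai))"
    proof -
      have "Ai * (A * transpose_mat B) * transpose_mat Ai = Ai * (B * transpose_mat A) * transpose_mat Ai"
        using R2 by simp
      thus ?thesis using Ai c by (simp add: ms)
    qed
    also have "\<dots> = Z" unfolding tAAi Z_def using Ai c by simp
    finally show ?thesis .
  qed
  obtain W \<sigma> where W: "unitary_mat n W" "\<forall>i. \<sigma> i \<ge> 0" "Z = W * diagR n \<sigma> * transpose_mat W"
    using takagi[OF Zc symZ] by blast
  note w = unitaryD[OF W(1)] unitary_cmat_transpose[OF W(1)]
  have Wc: "W \<in> carrier_mat n n" using w by simp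
  define D where "D = diagR n \<sigma>"
  define D2 where "D2 = diagR n (\<lambda>i. \<sigma> i * \<sigma> i)"
  have Dc: "D \<in> carrier_mat n n" "D2 \<in> carrier_mat n n" unfolding D_def D2_def by auto
  have Dsym: "adj D = D" "transpose_mat D = D" "cmat D = D" unfolding D_def by simp_all
  have DD: "D * D = D2" unfolding D_def D2_def by (rule diagR_mult)
  have step4: "Ai * adj Ai = 1\<^sub>m n - Z * adj Z"
  proof -
    have "Ai * (A * adj A - B * adj B) * adj Ai = Ai * adj Ai" using R1 Ai by simp
    moreover have "Ai * (A * (adj A * adj Ai)) = adj A * adj Ai"
      using Ai c by (intro cancel_r[of Ai A n _ n]) auto
    ultimately have "adj A * adj Ai - Ai * (B * (adj B * adj Ai)) = Ai * adj Ai"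
      using Ai c by (simp add: ms)
    thus ?thesis unfolding adjAAi Z_def using Ai c by (simp add: ms)
  qed
  have step5: "Z * adj Z = W * (D2 * adj W)"
  proof -
    have "Z * adj Z = W * (D * (transpose_mat W * (cmat W * (D * adj W))))"
      unfolding W(3) D_def[symmetric] using Wc Dc by (simp add: ms Dsym)
    also have "transpose_mat W * (cmat W * (D * adj W)) = D * adj W"
      using Wc Dc w by (intro cancel_r[of _ _ n _ n]) auto
    also have "D * (D * adj W) = D2 * adj W" unfolding DD[symmetric] using Dc Wc by (simp add: ms)
    finally show ?thesis .
  qed
  define Y where "Y = adj W * Ai"
  have Yc: "Y \<in> carrier_mat n n" unfolding Y_def using Wc Ai by simp
  have YY: "Y * adj Y = diagR n (\<lambda>i. 1 - \<sigma> i * \<sigma> i)"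
  proof -
    have "Y * adj Y = adj W * ((Ai * adj Ai) * W)" unfolding Y_def using Wc Ai by (simp add: ms)
    also have "\<dots> = adj W * W - adj W * (W * (D2 * (adj W * W)))"
      unfolding step4 step5 using Wc Dc Ai by (simp add: ms)
    also have "\<dots> = 1\<^sub>m n - D2"
      using Wc Dc w by (simp add: cancel_r[of "adj W" W n _ n])
    finally show ?thesis unfolding D2_def one_minus_diagR .
  qed
  have YAW: "Y * (A * W) = 1\<^sub>m n"
  proof -
    have "Y * (A * W) = adj W * (Ai * (A * W))" unfolding Y_def using Wc Ai c by (simp add: ms)
    also have "Ai * (A * W) = W" using Ai c Wc by (intro cancel_r[of _ _ n _ n]) auto
    finally show ?thesis using w by simp
  qed
  have AWY: "(A * W) * Y = 1\<^sub>m n"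
  proof -
    have "(A * W) * Y = A * (W * (adj W * Ai))" unfolding Y_def using Wc Ai c by (simp add: ms)
    also have "W * (adj W * Ai) = Ai" using Ai Wc w by (intro cancel_r[of _ _ n _ n]) auto
    finally show ?thesis using Ai by simp
  qed
  have sig1: "\<sigma> i * \<sigma> i < 1" if i: "i < n" for i
  proof (rule ccontr)
    assume "\<not> \<sigma> i * \<sigma> i < 1"
    hence le: "1 - \<sigma> i * \<sigma> i \<le> 0" by simp
    have "(Y * adj Y) $$ (i,i) = (\<Sum>k<n. Y $$ (i,k) * cnj (Y $$ (i,k)))"
      using Yc i by (simp add: mm_index[of _ n n _ n] del: index_mult_mat)
    also have "\<dots> = (\<Sum>k<n. complex_of_real ((cmod (Y $$ (i,k)))\<^sup>2))"
      by (intro sum.cong refl) (rule complex_norm_square[symmetric])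
    also have "\<dots> = complex_of_real (\<Sum>k<n. (cmod (Y $$ (i,k)))\<^sup>2)" by simp
    finally have "complex_of_real (\<Sum>k<n. (cmod (Y $$ (i,k)))\<^sup>2) = complex_of_real (1 - \<sigma> i * \<sigma> i)"
      unfolding YY using i by (simp add: diagR_def)
    hence "(\<Sum>k<n. (cmod (Y $$ (i,k)))\<^sup>2) = 1 - \<sigma> i * \<sigma> i" by (simp only: of_real_eq_iff)
    with le have "(\<Sum>k<n. (cmod (Y $$ (i,k)))\<^sup>2) = 0"
      by (smt (verit) sum_nonneg zero_le_power2)
    hence "\<forall>k\<in>{..<n}. (cmod (Y $$ (i,k)))\<^sup>2 = 0" by (subst (asm) sum_nonneg_eq_0_iff) auto
    hence Y0: "Y $$ (i,k) = 0" if "k < n" for k using that by auto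
    have "(Y * (A * W)) $$ (i,i) = (\<Sum>k<n. Y $$ (i,k) * (A * W) $$ (k,i))"
      using Yc c Wc i by (simp add: mm_index[of _ n n _ n] del: index_mult_mat)
    also have "\<dots> = 0" using Y0 by simp
    finally show False unfolding YAW using i by simp
  qed
  define d where "d = (\<lambda>i. sqrt (1 - \<sigma> i * \<sigma> i))"
  have dpos: "d i > 0" if "i < n" for i unfolding d_def using sig1[OF that] by simp
  have dsq: "d i * d i = 1 - \<sigma> i * \<sigma> i" if "i < n" for i unfolding d_def using sig1[OF that] by simp
  define r where "r = (\<lambda>i. if i < n then arsinh (\<sigma> i / d i) else 0)"
  have coshr: "d i * cosh (r i) = 1" if i: "i < n" for i
  proof -
    have "cosh (r i) = sqrt ((\<sigma> i / d i)\<^sup>2 + 1)" unfolding r_def using i by (simp add: cosh_arsinh_real)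
    also have "(\<sigma> i / d i)\<^sup>2 + 1 = 1 / (d i * d i)"
      using dpos[OF i] dsq[OF i] by (simp add: field_simps power2_eq_square)
    also have "sqrt (1 / (d i * d i)) = 1 / d i"
      using dpos[OF i] by (simp add: real_sqrt_divide real_sqrt_mult_self abs_of_pos)
    finally show ?thesis using dpos[OF i] by simp
  qed
  have sinhr: "d i * sinh (r i) = \<sigma> i" if i: "i < n" for i
    unfolding r_def using i dpos[OF i] by simp
  define Dinv where "Dinv = diagR n d"
  have Dinvc: "Dinv \<in> carrier_mat n n" unfolding Dinv_def by simp
  define C where "C = diagR n (\<lambda>i. cosh (r i))"
  define S where "S = diagR n (\<lambda>i. sinh (r i))"
  have Cc: "C \<in> carrier_mat n n" "S \<in> carrier_mat n n" unfolding C_def S_def by auto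
  have DC: "Dinv * C = 1\<^sub>m n"
    unfolding Dinv_def C_def diagR_mult diagR_one[symmetric] by (rule diagR_cong) (simp add: coshr)
  have DS: "Dinv * S = D"
    unfolding Dinv_def S_def diagR_mult D_def by (rule diagR_cong) (simp add: sinhr)
  define U where "U = A * W * Dinv"
  define V where "V = adj W"
  have Uc: "U \<in> carrier_mat n n" unfolding U_def using c Wc Dinvc by simp
  have VU: "unitary_mat n V" unfolding V_def using W(1) by (rule unitary_adj)
  have Aeq: "A = U * C * V"
  proof -
    have "U * C * V = A * (W * (Dinv * (C * adj W)))" unfolding U_def V_def using c Wc Dinvc Cc by (simp add: ms)
    also have "Dinv * (C * adj W) = adj W" using DC Dinvc Cc Wc by (intro cancel_r[of _ _ n _ n]) auto
    finally show ?thesis using w c by simp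
  qed
  have Beq: "B = U * S * cmat V"
  proof -
    have "U * S * cmat V = A * (W * (Dinv * (S * transpose_mat W)))" unfolding U_def V_def using c Wc Dinvc Cc by (simp add: ms)
    also have "Dinv * (S * transpose_mat W) = D * transpose_mat W"
      using DS Dinvc Cc Wc by (simp add: ms flip: DS)
    also have "A * (W * (D * transpose_mat W)) = A * Z" unfolding W(3) D_def using c Wc by (simp add: ms)
    also have "\<dots> = B" unfolding Z_def using Ai c by (intro cancel_r[of _ _ n _ n]) auto
    finally show ?thesis by simp
  qed
  define Q where "Q = adj (A * W) * (A * W)"
  have Qc: "Q \<in> carrier_mat n n" unfolding Q_def using c Wc by simp
  have QY: "Q * diagR n (\<lambda>i. 1 - \<sigma> i * \<sigma> i) = 1\<^sub>m n"
  proof -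
    have "Q * (Y * adj Y) = adj (A * W) * ((A * W) * Y * adj Y)"
      unfolding Q_def using c Wc Yc by (simp add: ms)
    also have "\<dots> = adj (A * W) * adj Y" unfolding AWY using Yc by simp
    also have "\<dots> = adj (Y * (A * W))" using Yc c Wc by (simp add: ms)
    also have "\<dots> = 1\<^sub>m n" unfolding YAW by simp
    finally show ?thesis unfolding YY .
  qed
  have Qent: "Q $$ (i,j) * complex_of_real (1 - \<sigma> j * \<sigma> j) = (if i = j then 1 else 0)"
    if "i < n" "j < n" for i j
    using arg_cong[OF QY, of "\<lambda>X. X $$ (i,j)"] that Qc by (simp add: mult_diagR)
  have UU: "adj U * U = 1\<^sub>m n"
  proof -
    have "adj U * U = Dinv * Q * Dinv" unfolding U_def Q_def Dinv_def using c Wc by (simp add: ms)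
    also have "\<dots> = 1\<^sub>m n"
    proof (rule eq_matI)
      fix i j assume "i < dim_row (1\<^sub>m n)" "j < dim_col (1\<^sub>m n)"
      hence ij: "i < n" "j < n" by auto
      have e: "(Dinv * Q * Dinv) $$ (i,j) = complex_of_real (d i) * Q $$ (i,j) * complex_of_real (d j)"
        unfolding Dinv_def by (rule diag_both_entry[OF Qc ij])
      show "(Dinv * Q * Dinv) $$ (i,j) = 1\<^sub>m n $$ (i,j)"
      proof (cases "i = j")
        case True
        have "complex_of_real (d i) * Q $$ (i,i) * complex_of_real (d i) = Q $$ (i,i) * complex_of_real (1 - \<sigma> i * \<sigma> i)"
          using dsq[OF ij(1)] by (simp flip: of_real_mult add: ac_simps)
        hence "(Dinv * Q * Dinv) $$ (i,j) = Q $$ (i,i) * complex_of_real (1 - \<sigma> i * \<sigma> i)"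
          using e True by simp
        also have "\<dots> = 1" using Qent[OF ij(1) ij(1)] by simp
        finally show ?thesis using True ij by simp
      next
        case False
        have "1 - \<sigma> j * \<sigma> j \<noteq> 0" using sig1[OF ij(2)] by simp
        moreover have "Q $$ (i,j) * complex_of_real (1 - \<sigma> j * \<sigma> j) = 0"
          using Qent[OF ij] False by (simp del: of_real_diff of_real_mult)
        ultimately have "Q $$ (i,j) = 0" by (simp only: mult_eq_0_iff of_real_eq_0_iff) simp
        thus ?thesis using e False ij by simp
      qed
    qed (use Dinvc Qc in auto)
    finally show ?thesis .
  qed
  have UU': "unitary_mat n U" using Uc UU by (rule unitaryI_left)
  have card: "card {i. i < n \<and> r i \<noteq> 0} \<le> m"
  proof -
    have "{i. i < n \<and> r i \<noteq> 0} = {i. i < n \<and> \<sigma> i \<noteq> 0}"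
    proof (intro Collect_cong conj_cong refl)
      fix i assume i: "i < n"
      have "r i = 0 \<longleftrightarrow> \<sigma> i = 0"
      proof
        assume "r i = 0"
        hence "sinh (r i) = 0" by simp
        thus "\<sigma> i = 0" using sinhr[OF i] by simp
      qed (simp add: r_def)
      thus "(r i \<noteq> 0) = (\<sigma> i \<noteq> 0)" by simp
    qed
    moreover have "card {i. i < n \<and> \<sigma> i \<noteq> 0} \<le> m"
    proof (rule diag_rank)
      have "diagR n \<sigma> = adj W * (W * (D * (transpose_mat W * cmat W)))"
        unfolding D_def using Wc w by (simp add: cancel_r[of "adj W" W n _ n])
      also have "\<dots> = adj W * Z * cmat W" unfolding W(3) D_def using Wc by (simp add: ms)
      also have "\<dots> = adj W * (Ai * (F * H)) * cmat W" unfolding Z_def BFH ..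
      also have "\<dots> = (adj W * Ai * F) * (H * cmat W)"
      proof -
        have a1: "Ai * (F * H) = (Ai * F) * H" by (rule assoc_mult_mat[symmetric]) (use Ai Fc Hc in auto)
        have a2: "adj W * ((Ai * F) * H) = (adj W * (Ai * F)) * H"
          by (rule assoc_mult_mat[symmetric]) (use Wc Ai Fc Hc in auto)
        have a3: "(adj W * Ai * F) * H * cmat W = (adj W * Ai * F) * (H * cmat W)"
          by (rule assoc_mult_mat) (use Wc Ai Fc Hc in auto)
        have a4: "adj W * (Ai * F) = adj W * Ai * F"
          by (rule assoc_mult_mat[symmetric]) (use Wc Ai Fc Hc in auto)
        show ?thesis unfolding a1 a2 a4 a3 ..
      qed
      finally show "diagR n \<sigma> = (adj W * Ai * F) * (H * cmat W)" .
      show "adj W * Ai * F \<in> carrier_mat n m" using Wc Ai Fc by simp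
      show "H * cmat W \<in> carrier_mat m n" using Wc Hc by simp
    qed
    ultimately show ?thesis by simp
  qed
  show ?thesis using UU' VU card Aeq Beq unfolding C_def S_def by blast
qed

lemma bm_form:
  assumes U: "U \<in> carrier_mat n n" and V: "V \<in> carrier_mat n n"
  shows "bogo_comp (lin_opt n U) (bogo_comp (squeezer n r) (lin_opt n V)) =
     (U * diagR n (\<lambda>i. cosh (r i)) * V, U * diagR n (\<lambda>i. sinh (r i)) * cmat V)"
  unfolding bogo_comp_def lin_opt_def squeezer_diag using U V by (simp add: msq[where n=n])

lemma rowrel_lin: "unitary_mat n U \<Longrightarrow> rowrel n (lin_opt n U)"
  unfolding rowrel_def lin_opt_def using unitaryD[of n U] by auto

lemma rowrel_sq: "rowrel n (squeezer n r)"
proof -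
  have "diagR n (\<lambda>i. cosh (r i)) * diagR n (\<lambda>i. cosh (r i)) - diagR n (\<lambda>i. sinh (r i)) * diagR n (\<lambda>i. sinh (r i))
        = 1\<^sub>m n"
    unfolding diagR_mult
    apply (rule eq_matI)
       apply (auto simp: diagR_def simp flip: of_real_mult of_real_diff)
    subgoal for j using cosh_square_eq[of "r j"] by (simp add: power2_eq_square)
    done
  moreover have "diagR n (\<lambda>i. cosh (r i)) * diagR n (\<lambda>i. sinh (r i)) = diagR n (\<lambda>i. sinh (r i)) * diagR n (\<lambda>i. cosh (r i))"
    unfolding diagR_mult by (simp add: mult.commute)
  ultimately show ?thesis unfolding rowrel_def squeezer_diag by simp
qed

lemma phase_unitary: "unitary_mat n (fst (phase_shifter n \<phi>))"
proof (rule unitaryI_left)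
  show "fst (phase_shifter n \<phi>) \<in> carrier_mat n n" by (simp add: phase_shifter_def)
  show "adj (fst (phase_shifter n \<phi>)) * fst (phase_shifter n \<phi>) = 1\<^sub>m n"
  proof (rule eq_matI)
    fix i j assume "i < dim_row (1\<^sub>m n)" "j < dim_col (1\<^sub>m n)"
    hence ij: "i < n" "j < n" by auto
    have "(adj (fst (phase_shifter n \<phi>)) * fst (phase_shifter n \<phi>)) $$ (i,j)
       = (\<Sum>k<n. cnj (fst (phase_shifter n \<phi>) $$ (k,i)) * fst (phase_shifter n \<phi>) $$ (k,j))"
      using ij by (simp add: mm_index[of _ n n _ n] phase_shifter_def del: index_mult_mat)
    also have "\<dots> = (\<Sum>k<n. if k = i \<and> k = j then cnj (cis (\<phi> k)) * cis (\<phi> k) else 0)"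
      using ij by (intro sum.cong refl) (auto simp: phase_shifter_def)
    also have "\<dots> = 1\<^sub>m n $$ (i,j)" using ij by (auto simp: cis_cnj cis_mult)
    finally show "(adj (fst (phase_shifter n \<phi>)) * fst (phase_shifter n \<phi>)) $$ (i,j) = 1\<^sub>m n $$ (i,j)" .
  qed (auto simp: phase_shifter_def)
qed

lemma rowrel_phase: "rowrel n (phase_shifter n \<phi>)"
proof -
  have "phase_shifter n \<phi> = lin_opt n (fst (phase_shifter n \<phi>))"
    by (simp add: phase_shifter_def lin_opt_def)
  thus ?thesis using rowrel_lin[OF phase_unitary[of n \<phi>]] by simp
qed

lemma rowrel_bm:
  assumes "unitary_mat n U" "unitary_mat n V"
  shows "rowrel n (bogo_comp (lin_opt n U) (bogo_comp (squeezer n r) (lin_opt n V)))"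
  by (intro rowrel_comp rowrel_lin rowrel_sq assms)

lemma diagR_uminus: "diagR n (\<lambda>i. - a i) = - diagR n a"
  unfolding diagR_def by (rule eq_matI) auto

lemma bogo_adj_bm:
  assumes U: "unitary_mat n U" and V: "unitary_mat n V"
  shows "bogo_adj (bogo_comp (lin_opt n U) (bogo_comp (squeezer n s) (lin_opt n V)))
       = bogo_comp (lin_opt n (adj V)) (bogo_comp (squeezer n (\<lambda>i. - s i)) (lin_opt n (adj U)))"
proof -
  have Uc: "U \<in> carrier_mat n n" and Vc: "V \<in> carrier_mat n n" using unitaryD U V by auto
  have aV: "adj V \<in> carrier_mat n n" and aU: "adj U \<in> carrier_mat n n" using Uc Vc by auto
  show ?thesis
    unfolding bm_form[OF Uc Vc] bm_form[OF aV aU] bogo_adj_def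
    using Uc Vc by (simp add: msq[where n=n] mcon diagR_uminus)
qed

lemma diagL_entry:
  assumes X: "X \<in> carrier_mat n m" and k: "k < n" and j: "j < m"
  shows "(mat n n (\<lambda>(i,j). if i = j then f i else 0) * X) $$ (k,j) = f k * X $$ (k,j)"
proof -
  have "(mat n n (\<lambda>(i,j). if i = j then f i else 0) * X) $$ (k,j)
      = (\<Sum>l<n. mat n n (\<lambda>(i,j). if i = j then f i else 0) $$ (k,l) * X $$ (l,j))"
    using X k j by (simp add: mm_index[of _ n n _ m] del: index_mult_mat)
  also have "\<dots> = (\<Sum>l<n. if l = k then f k * X $$ (k,j) else 0)"
    using k by (intro sum.cong refl) auto
  also have "\<dots> = f k * X $$ (k,j)" using k by simp
  finally show ?thesis .
qed

lemma sum_double_split: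
  fixes f :: "nat \<Rightarrow> 'a :: comm_monoid_add" and L :: nat
  shows "(\<Sum>k<L+L. f k) = (\<Sum>k<L. f k) + (\<Sum>k<L. f (k + L))"
proof -
  have "(\<Sum>k<L+L. f k) = sum f {0..<L} + sum f {L..<L+L}"
    by (simp add: atLeast0LessThan[symmetric] sum.atLeastLessThan_concat)
  also have "sum f {L..<L+L} = sum (\<lambda>k. f (k + L)) {0..<L}"
    using sum.shift_bounds_nat_ivl[of f 0 L L] by simp
  finally show ?thesis by (simp add: atLeast0LessThan)
qed

lemma sum_restrict_lt:
  fixes f :: "nat \<Rightarrow> 'a :: comm_monoid_add" and L n :: nat
  assumes "L \<le> n"
  shows "(\<Sum>k<n. if k < L then f k else 0) = (\<Sum>k<L. f k)"
proof -
  have "(\<Sum>k<n. if k < L then f k else 0) = (\<Sum>k\<in>{k\<in>{..<n}. k < L}. f k)"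
    by (rule sum.inter_filter[symmetric]) simp
  also have "{k\<in>{..<n}. k < L} = {..<L}" using assms by auto
  finally show ?thesis .
qed

theorem lemma6:
  fixes M L :: nat and \<phi> :: "nat \<Rightarrow> real" and G0 :: bogo
  assumes "L \<le> M"
    and "gaussian M G0"
  shows "\<exists>U V r. unitary_mat M U \<and> unitary_mat M V \<and>
           card {i. i < M \<and> r i \<noteq> 0} \<le> 2 * L \<and>
           bogo_comp (bogo_adj G0)
             (bogo_comp (phase_shifter M (\<lambda>i. if i < L then \<phi> i else 0)) G0)
           = bogo_comp (lin_opt M U) (bogo_comp (squeezer M r) (lin_opt M V))"
proof -
  note ms = msq[where n=M] mcon
  obtain U0 V0 s where U0: "unitary_mat M U0" and V0: "unitary_mat M V0"
    and G0eq: "G0 = bogo_comp (lin_opt M U0) (bogo_comp (squeezer M s) (lin_opt M V0))"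
    using assms(2) unfolding gaussian_def by blast
  have U0c: "U0 \<in> carrier_mat M M" and V0c: "V0 \<in> carrier_mat M M" using unitaryD U0 V0 by auto
  define A0 where "A0 = U0 * diagR M (\<lambda>i. cosh (s i)) * V0"
  define B0 where "B0 = U0 * diagR M (\<lambda>i. sinh (s i)) * cmat V0"
  have G0AB: "G0 = (A0, B0)" unfolding G0eq A0_def B0_def by (rule bm_form[OF U0c V0c])
  have A0c: "A0 \<in> carrier_mat M M" and B0c: "B0 \<in> carrier_mat M M"
    unfolding A0_def B0_def using U0c V0c by auto
  have rrG0: "rowrel M G0" unfolding G0eq by (rule rowrel_bm[OF U0 V0])
  have rrA: "rowrel M (bogo_adj G0)"
    unfolding G0eq bogo_adj_bm[OF U0 V0] by (rule rowrel_bm[OF unitary_adj[OF V0] unitary_adj[OF U0]])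
  define \<phi>L where "\<phi>L = (\<lambda>i. if i < L then \<phi> i else 0)"
  define Dm where "Dm = fst (phase_shifter M \<phi>L)"
  have PD: "phase_shifter M \<phi>L = (Dm, 0\<^sub>m M M)" by (simp add: Dm_def phase_shifter_def)
  have Dmc: "Dm \<in> carrier_mat M M" by (simp add: Dm_def phase_shifter_def)
  define K where "K = bogo_comp (bogo_adj G0) (bogo_comp (phase_shifter M \<phi>L) G0)"
  have rrK: "rowrel M K" unfolding K_def
    by (intro rowrel_comp rrA rowrel_phase rrG0)
  obtain AK BK where KAB: "K = (AK, BK)" by force
  have rrK': "rowrel M (AK, BK)" using rrK KAB by simp
  have BK: "BK = adj A0 * (Dm * B0) + (- transpose_mat B0) * (cmat Dm * cmat A0)"
    using KAB unfolding K_def G0AB PD bogo_comp_def bogo_adj_def using A0c B0c Dmc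
    by (simp add: ms)
  have rel: "adj A0 * B0 = transpose_mat B0 * cmat A0"
    using rrA carrier_matD[OF A0c] carrier_matD[OF B0c]
    unfolding G0AB bogo_adj_def rowrel_def by (simp add: transpose_uminus mcon)
  define f where "f = (\<lambda>i. if i < L then cis (\<phi> i) - 1 else 0)"
  define E where "E = mat M M (\<lambda>(i,j). if i = j then f i else 0)"
  have Ec: "E \<in> carrier_mat M M" unfolding E_def by simp
  have cE: "cmat E = mat M M (\<lambda>(i,j). if i = j then cnj (f i) else 0)"
    unfolding E_def by (rule eq_matI) auto
  have DmE: "Dm = E + 1\<^sub>m M"
    unfolding Dm_def E_def f_def \<phi>L_def phase_shifter_def by (rule eq_matI) auto
  have BK2: "BK = adj A0 * (E * B0) + (- transpose_mat B0) * (cmat E * cmat A0)"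
  proof (rule mat_eq_ent[of _ M])
    fix i j assume ij: "i < M" "j < M"
    have e1: "BK = adj A0 * (E * B0) + adj A0 * B0 + (- (transpose_mat B0 * (cmat E * cmat A0)) + - (transpose_mat B0 * cmat A0))"
      unfolding BK DmE using A0c B0c Ec by (simp add: ms)
    show "ent i j BK = ent i j (adj A0 * (E * B0) + (- transpose_mat B0) * (cmat E * cmat A0))"
      using arg_cong[OF e1, of "ent i j"] arg_cong[OF rel, of "ent i j"] ij A0c B0c Ec
      by (simp add: ent_simps[where n=M] ms)
  qed (use A0c B0c Ec KAB rrK' in \<open>auto simp: rowrel_def\<close>)
  define F where "F = mat M (L + L) (\<lambda>(i,k). if k < L then cnj (A0 $$ (k,i)) * (cis (\<phi> k) - 1)
                         else - (B0 $$ (k - L, i)) * cnj (cis (\<phi> (k - L)) - 1))"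
  define H where "H = mat (L + L) M (\<lambda>(k,j). if k < L then B0 $$ (k,j) else cnj (A0 $$ (k - L, j)))"
  have Fc: "F \<in> carrier_mat M (2 * L)" unfolding F_def by (simp add: mult_2)
  have Hc: "H \<in> carrier_mat (2 * L) M" unfolding H_def by (simp add: mult_2)
  have FH: "BK = F * H"
  proof (rule eq_matI)
    fix i j assume "i < dim_row (F * H)" "j < dim_col (F * H)"
    hence ij: "i < M" "j < M" unfolding F_def H_def by auto
    have t1: "(adj A0 * (E * B0)) $$ (i,j) = (\<Sum>k<L. cnj (A0 $$ (k,i)) * (cis (\<phi> k) - 1) * B0 $$ (k,j))"
    proof -
      have "(adj A0 * (E * B0)) $$ (i,j) = (\<Sum>k<M. adj A0 $$ (i,k) * (E * B0) $$ (k,j))"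
        using A0c B0c Ec ij by (simp add: mm_index[of _ M M _ M] del: index_mult_mat)
      also have "\<dots> = (\<Sum>k<M. if k < L then cnj (A0 $$ (k,i)) * (cis (\<phi> k) - 1) * B0 $$ (k,j) else 0)"
        using A0c B0c ij unfolding E_def by (intro sum.cong refl) (auto simp: diagL_entry[OF B0c] f_def simp del: index_mult_mat)
      also have "\<dots> = (\<Sum>k<L. cnj (A0 $$ (k,i)) * (cis (\<phi> k) - 1) * B0 $$ (k,j))"
        by (rule sum_restrict_lt[OF assms(1)])
      finally show ?thesis .
    qed
    have t2: "((- transpose_mat B0) * (cmat E * cmat A0)) $$ (i,j)
            = (\<Sum>k<L. - (B0 $$ (k,i)) * cnj (cis (\<phi> k) - 1) * cnj (A0 $$ (k,j)))"
    proof -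
      have "((- transpose_mat B0) * (cmat E * cmat A0)) $$ (i,j)
          = (\<Sum>k<M. (- transpose_mat B0) $$ (i,k) * (cmat E * cmat A0) $$ (k,j))"
        using A0c B0c Ec ij by (simp add: mm_index[of _ M M _ M] del: index_mult_mat)
      also have "\<dots> = (\<Sum>k<M. if k < L then - (B0 $$ (k,i)) * cnj (cis (\<phi> k) - 1) * cnj (A0 $$ (k,j)) else 0)"
        using A0c B0c ij unfolding cE by (intro sum.cong refl) (auto simp: diagL_entry[of "cmat A0" M M] f_def simp del: index_mult_mat)
      also have "\<dots> = (\<Sum>k<L. - (B0 $$ (k,i)) * cnj (cis (\<phi> k) - 1) * cnj (A0 $$ (k,j)))"
        by (rule sum_restrict_lt[OF assms(1)])
      finally show ?thesis .
    qed
    have "(F * H) $$ (i,j) = (\<Sum>k<L+L. F $$ (i,k) * H $$ (k,j))"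
      using ij unfolding F_def H_def by (simp add: mm_index[of _ M "L+L" _ M] del: index_mult_mat)
    also have "\<dots> = (\<Sum>k<L. F $$ (i,k) * H $$ (k,j)) + (\<Sum>k<L. F $$ (i,k+L) * H $$ (k+L,j))"
      by (rule sum_double_split)
    also have "(\<Sum>k<L. F $$ (i,k) * H $$ (k,j)) = (\<Sum>k<L. cnj (A0 $$ (k,i)) * (cis (\<phi> k) - 1) * B0 $$ (k,j))"
      using ij unfolding F_def H_def by (intro sum.cong refl) auto
    also have "(\<Sum>k<L. F $$ (i,k+L) * H $$ (k+L,j)) = (\<Sum>k<L. - (B0 $$ (k,i)) * cnj (cis (\<phi> k) - 1) * cnj (A0 $$ (k,j)))"
      using ij unfolding F_def H_def by (intro sum.cong refl) auto
    finally have "(F * H) $$ (i,j) = (adj A0 * (E * B0)) $$ (i,j) + ((- transpose_mat B0) * (cmat E * cmat A0)) $$ (i,j)"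
      unfolding t1 t2 .
    thus "BK $$ (i,j) = (F * H) $$ (i,j)" unfolding BK2 using ij A0c B0c Ec by simp
  qed (use BK2 A0c B0c Ec F_def H_def in auto)
  obtain U V r where UV: "unitary_mat M U" "unitary_mat M V" "card {i. i < M \<and> r i \<noteq> 0} \<le> 2 * L"
    and AK: "AK = U * diagR M (\<lambda>i. cosh (r i)) * V" and BKe: "BK = U * diagR M (\<lambda>i. sinh (r i)) * cmat V"
    using bm_decomp[OF rrK' Fc Hc FH] by blast
  have "K = bogo_comp (lin_opt M U) (bogo_comp (squeezer M r) (lin_opt M V))"
    unfolding KAB AK BKe using unitaryD UV by (subst bm_form) auto
  thus ?thesis using UV unfolding K_def \<phi>L_def by blast
qed

end
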